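(* Let $\ell\ge 1$ and $n$ be positive integers and let $\mathcal{C}$ be a family of $(\ell+1)$-subsets of $[n]$. Then $\mathcal{C}$ satisfies the condition (C$_{\ell+1}$): if $C_1, C_2 \in \mathcal{C}$ and $|C_1\cup C_2| = \ell+2$, then every $(\ell+1)$-subset $C_3$ of $C_1\cup C_2$ belongs to $\mathcal{C}$, if and only if there exists an $\ell$-generic matroid on $[n]$ whose family of all $(\ell+1)$-circuits is equal to $\mathcal{C}$.
   Context: $[n]=\{1,\ldots,n\}$. A matroid is $\ell$-generic if it has no circuits of cardinality $i$ for any $i\le\ell$. An $(\ell+1)$-circuit is a circuit of cardinality $\ell+1$. *)

theory Defs
  imports Main
begin

definition matroid :: "'a set \<Rightarrow> 'a set set \<Rightarrow> bool" where
  "matroid E I \<longleftrightarrow>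
     finite E \<and> (\<forall>X\<in>I. X \<subseteq> E) \<and> {} \<in> I \<and>
     (\<forall>X Y. X \<in> I \<and> Y \<subseteq> X \<longrightarrow> Y \<in> I) \<and>
     (\<forall>X Y. X \<in> I \<and> Y \<in> I \<and> card X < card Y \<longrightarrow> (\<exists>e\<in>Y - X. insert e X \<in> I))"

definition circuits :: "'a set \<Rightarrow> 'a set set \<Rightarrow> 'a set set" where
  "circuits E I = {C. C \<subseteq> E \<and> C \<notin> I \<and> (\<forall>D. D \<subset> C \<longrightarrow> D \<in> I)}"

definition generic :: "nat \<Rightarrow> 'a set \<Rightarrow> 'a set set \<Rightarrow> bool" where
  "generic l E I \<longleftrightarrow> (\<forall>C\<in>circuits E I. \<not> card C \<le> l)"

end

theory Submission
  imports Defs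
begin

lemma dep_contains_circuit:
  assumes "finite E" "D \<subseteq> E" "D \<notin> I"
  shows "\<exists>C. C \<subseteq> D \<and> C \<in> circuits E I"
proof -
  obtain C where C: "C \<subseteq> D" "C \<notin> I"
    and min: "\<And>C'. C' \<subseteq> D \<and> C' \<notin> I \<Longrightarrow> card C \<le> card C'"
    using ex_has_least_nat[where P="\<lambda>C. C \<subseteq> D \<and> C \<notin> I" and m=card and k=D] assms(3)
    by auto
  have fC: "finite C" using C(1) assms(1,2) by (meson finite_subset subset_trans)
  have "\<forall>D'. D' \<subset> C \<longrightarrow> D' \<in> I"
  proof (intro allI impI)
    fix D' assume "D' \<subset> C"
    then have "card D' < card C" by (rule psubset_card_mono[OF fC])
    moreover have "D' \<subseteq> D" using C \<open>D' \<subset> C\<close> by blast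
    ultimately show "D' \<in> I" using min[of D'] by (meson leD)
  qed
  moreover have "C \<subseteq> E" using C assms by blast
  ultimately have "C \<in> circuits E I" using C unfolding circuits_def by blast
  then show ?thesis using C by blast
qed

lemma chain_lemma:
  fixes \<C> :: "'a set set" and l :: nat
  assumes cond: "\<forall>C1\<in>\<C>. \<forall>C2\<in>\<C>. card (C1 \<union> C2) = l + 2 \<longrightarrow>
            (\<forall>C3. C3 \<subseteq> C1 \<union> C2 \<and> card C3 = l + 1 \<longrightarrow> C3 \<in> \<C>)"
    and fX: "finite X" and cX: "card X = l" and fW: "finite W" and disj: "X \<inter> W = {}"
    and base: "\<forall>e\<in>W. insert e X \<in> \<C>"
  shows "\<And>Z. card (Z \<inter> W) = m \<Longrightarrow> m \<ge> 1 \<Longrightarrow> Z \<subseteq> X \<union> W \<Longrightarrow> card Z = l + 1 \<Longrightarrow> Z \<in> \<C>"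
proof (induction m rule: less_induct)
  case (less m Z)
  have fZ: "finite Z" by (rule finite_subset[OF less.prems(3)]) (simp add: fX fW)
  show ?case
  proof (cases "m = 1")
    case True
    then obtain e where e: "Z \<inter> W = {e}" using less.prems card_1_singletonE by metis
    have "Z - {e} \<subseteq> X" using e less.prems by blast
    moreover have "card (Z - {e}) = l"
    proof -
      have "e \<in> Z" using e by blast
      then show ?thesis using True less.prems fZ by simp
    qed
    ultimately have "Z - {e} = X" using fX cX card_subset_eq by metis
    then have "Z = insert e X" using e by blast
    then show ?thesis using base e by auto
  next
    case False
    then have "m \<ge> 2" using less.prems by simp
    have fZW: "finite (Z \<inter> W)" using fZ by blast
    have "Z \<inter> W \<noteq> {}" using less.prems(1) \<open>m \<ge> 2\<close> by auto
    then obtain e1 where e1: "e1 \<in> Z \<inter> W" by blast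
    have "card (Z \<inter> W - {e1}) = m - 1" using e1 fZW less.prems(1) by simp
    then have "card (Z \<inter> W - {e1}) \<noteq> 0" using \<open>m \<ge> 2\<close> by simp
    then have "Z \<inter> W - {e1} \<noteq> {}" by (metis card.empty)
    then obtain e2 where e2: "e2 \<in> Z \<inter> W - {e1}" by blast
    have e12: "e1 \<in> Z \<inter> W" "e2 \<in> Z \<inter> W" "e1 \<noteq> e2" using e1 e2 by auto
    have ZX: "Z \<inter> X = Z - (Z \<inter> W)" using less.prems disj by blast
    have "card (Z \<inter> X) = l + 1 - m" using ZX less.prems fZ
      by (simp add: card_Diff_subset)
    moreover have "m \<le> l + 1" using card_mono[OF fZ Int_lower1[of Z W]] less.prems by simp
    ultimately have "card (Z \<inter> X) < card X" using cX \<open>m \<ge> 2\<close> by simp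
    have "\<not> X \<subseteq> Z"
    proof
      assume "X \<subseteq> Z"
      then have "X \<subseteq> Z \<inter> X" by blast
      then have "card X \<le> card (Z \<inter> X)" using card_mono fZ by blast
      then show False using \<open>card (Z \<inter> X) < card X\<close> by simp
    qed
    then obtain x where x: "x \<in> X" "x \<notin> Z" by blast
    have xW: "x \<notin> W" using x disj by blast
    define C1 where "C1 = insert x (Z - {e1})"
    define C2 where "C2 = insert x (Z - {e2})"
    have C1W: "C1 \<inter> W = Z \<inter> W - {e1}" using xW unfolding C1_def by blast
    have C2W: "C2 \<inter> W = Z \<inter> W - {e2}" using xW unfolding C2_def by blast
    have "card (C1 \<inter> W) = m - 1" using C1W e12 less.prems fZ by simp
    moreover have "card C1 = l + 1" unfolding C1_def using x e12 fZ less.prems by simp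
    moreover have "C1 \<subseteq> X \<union> W" unfolding C1_def using x less.prems by blast
    ultimately have C1in: "C1 \<in> \<C>" using less.IH[of "m - 1" C1] \<open>m \<ge> 2\<close> by simp
    have "card (C2 \<inter> W) = m - 1" using C2W e12 less.prems fZ by simp
    moreover have "card C2 = l + 1" unfolding C2_def using x e12 fZ less.prems by simp
    moreover have "C2 \<subseteq> X \<union> W" unfolding C2_def using x less.prems by blast
    ultimately have C2in: "C2 \<in> \<C>" using less.IH[of "m - 1" C2] \<open>m \<ge> 2\<close> by simp
    have U: "C1 \<union> C2 = insert x Z" unfolding C1_def C2_def using e12 by blast
    have "card (C1 \<union> C2) = l + 2" unfolding U using x fZ less.prems by simp
    then show ?thesis using cond C1in C2in U less.prems by blast
  qed
qed

theorem lemma2p2: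
  fixes l n :: nat and \<C> :: "nat set set"
  assumes "l \<ge> 1" and "n \<ge> 1"
    and "\<forall>C\<in>\<C>. C \<subseteq> {1..n} \<and> card C = l + 1"
  shows "(\<forall>C1\<in>\<C>. \<forall>C2\<in>\<C>. card (C1 \<union> C2) = l + 2 \<longrightarrow>
            (\<forall>C3. C3 \<subseteq> C1 \<union> C2 \<and> card C3 = l + 1 \<longrightarrow> C3 \<in> \<C>))
         \<longleftrightarrow>
         (\<exists>I. matroid {1..n} I \<and> generic l {1..n} I \<and>
              {C \<in> circuits {1..n} I. card C = l + 1} = \<C>)"
proof
  assume cond: "\<forall>C1\<in>\<C>. \<forall>C2\<in>\<C>. card (C1 \<union> C2) = l + 2 \<longrightarrow>
            (\<forall>C3. C3 \<subseteq> C1 \<union> C2 \<and> card C3 = l + 1 \<longrightarrow> C3 \<in> \<C>)"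
  define I where "I = {X. X \<subseteq> {1..n} \<and> card X \<le> l + 1 \<and> X \<notin> \<C>}"
  have fin: "\<And>X. X \<subseteq> {1..n::nat} \<Longrightarrow> finite X" by (meson finite_atLeastAtMost finite_subset)
  have aug: "\<exists>e\<in>Y - X. insert e X \<in> I" if XY: "X \<in> I" "Y \<in> I" "card X < card Y" for X Y
  proof -
    have fX: "finite X" and fY: "finite Y" using XY fin unfolding I_def by auto
    have "Y - X \<noteq> {}" using XY fX fY
      by (metis Diff_eq_empty_iff card_mono leD)
    then obtain e0 where e0: "e0 \<in> Y - X" by blast
    show ?thesis
    proof (cases "card X < l")
      case True
      have "insert e0 X \<in> I" using e0 XY True fX assms(3) unfolding I_def by auto
      then show ?thesis using e0 by blast
    next
      case False
      then have cX: "card X = l" and cY: "card Y = l + 1" using XY unfolding I_def by auto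
      show ?thesis
      proof (rule ccontr)
        assume "\<not> ?thesis"
        then have base: "\<forall>e\<in>Y - X. insert e X \<in> \<C>" using XY e0 fX cX unfolding I_def by auto
        have "Y \<inter> (Y - X) \<noteq> {}" using e0 by blast
        then have "card (Y \<inter> (Y - X)) \<ge> 1" using fY
          by (simp add: Suc_le_eq card_gt_0_iff)
        then have "Y \<in> \<C>"
          using chain_lemma[OF cond fX cX _ _ base, of Y "card (Y \<inter> (Y - X))"] fY cY by blast
        then show False using XY unfolding I_def by auto
      qed
    qed
  qed
  have M: "matroid {1..n} I"
    unfolding matroid_def
  proof (intro conjI allI impI ballI)
    show "{} \<in> I" using assms(3) unfolding I_def by force
  next
    fix X Y assume "X \<in> I \<and> Y \<subseteq> X"
    then have X: "X \<subseteq> {1..n}" "card X \<le> l + 1" "X \<notin> \<C>" "Y \<subseteq> X" unfolding I_def by auto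
    have fX: "finite X" using X fin by blast
    have cYX: "card Y \<le> card X" using card_mono[OF fX X(4)] .
    have "Y \<notin> \<C>"
    proof
      assume "Y \<in> \<C>"
      then have "card Y = l + 1" using assms(3) by blast
      then have "Y = X" using card_subset_eq[OF fX X(4)] X cYX by simp
      then show False using X \<open>Y \<in> \<C>\<close> by simp
    qed
    then show "Y \<in> I" unfolding I_def using X cYX by auto
  next
    fix X Y assume "X \<in> I \<and> Y \<in> I \<and> card X < card Y"
    then show "\<exists>e\<in>Y - X. insert e X \<in> I" using aug by blast
  qed (auto simp: I_def)
  have G: "generic l {1..n} I"
    unfolding generic_def circuits_def I_def using assms(3) by fastforce
  have "{C \<in> circuits {1..n} I. card C = l + 1} = \<C>"
  proof
    show "{C \<in> circuits {1..n} I. card C = l + 1} \<subseteq> \<C>"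
    proof
      fix C assume "C \<in> {C \<in> circuits {1..n} I. card C = l + 1}"
      then have "C \<subseteq> {1..n}" "C \<notin> I" "card C = l + 1" unfolding circuits_def by auto
      then show "C \<in> \<C>" unfolding I_def by simp
    qed
  next
    show "\<C> \<subseteq> {C \<in> circuits {1..n} I. card C = l + 1}"
    proof
      fix C assume C: "C \<in> \<C>"
      have CE: "C \<subseteq> {1..n}" and cC: "card C = l + 1" using C assms(3) by auto
      have fC: "finite C" using CE fin by blast
      have "\<forall>D. D \<subset> C \<longrightarrow> D \<in> I"
      proof (intro allI impI)
        fix D assume DC: "D \<subset> C"
        have "card D < card C" using psubset_card_mono[OF fC DC] .
        then have "card D \<le> l + 1" "D \<notin> \<C>" using cC assms(3) by auto
        moreover have "D \<subseteq> {1..n}" using DC CE by blast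
        ultimately show "D \<in> I" unfolding I_def by simp
      qed
      moreover have "C \<notin> I" using C unfolding I_def by simp
      ultimately show "C \<in> {C \<in> circuits {1..n} I. card C = l + 1}"
        using CE cC unfolding circuits_def by simp
    qed
  qed
  then show "\<exists>I. matroid {1..n} I \<and> generic l {1..n} I \<and>
              {C \<in> circuits {1..n} I. card C = l + 1} = \<C>" using M G by blast
next
  assume "\<exists>I. matroid {1..n} I \<and> generic l {1..n} I \<and>
              {C \<in> circuits {1..n} I. card C = l + 1} = \<C>"
  then obtain I where M: "matroid {1..n} I" and G: "generic l {1..n} I"
    and CC: "{C \<in> circuits {1..n} I. card C = l + 1} = \<C>" by blast
  have fin: "\<And>X. X \<subseteq> {1..n::nat} \<Longrightarrow> finite X" by (meson finite_atLeastAtMost finite_subset)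
  have down: "\<And>X Y. X \<in> I \<Longrightarrow> Y \<subseteq> X \<Longrightarrow> Y \<in> I" using M unfolding matroid_def by blast
  have augm: "\<And>X Y. X \<in> I \<Longrightarrow> Y \<in> I \<Longrightarrow> card X < card Y \<Longrightarrow> \<exists>e\<in>Y - X. insert e X \<in> I"
    using M unfolding matroid_def by blast
  show "\<forall>C1\<in>\<C>. \<forall>C2\<in>\<C>. card (C1 \<union> C2) = l + 2 \<longrightarrow>
            (\<forall>C3. C3 \<subseteq> C1 \<union> C2 \<and> card C3 = l + 1 \<longrightarrow> C3 \<in> \<C>)"
  proof (intro ballI impI allI, elim conjE)
    fix C1 C2 C3 assume C1: "C1 \<in> \<C>" and C2: "C2 \<in> \<C>" and U: "card (C1 \<union> C2) = l + 2"
      and C3: "C3 \<subseteq> C1 \<union> C2" "card C3 = l + 1"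
    have C1c: "C1 \<in> circuits {1..n} I" "card C1 = l + 1" using C1 CC by auto
    have C2c: "C2 \<in> circuits {1..n} I" "card C2 = l + 1" using C2 CC by auto
    have f1: "finite C1" and f2: "finite C2" using C1c C2c fin unfolding circuits_def by auto
    have sub3: "C3 \<subseteq> {1..n}" using C3 C1c C2c unfolding circuits_def by blast
    have cJ: "card (C1 \<inter> C2) = l" using card_Un_Int[OF f1 f2] U C1c C2c by simp
    have J1: "C1 \<inter> C2 \<subset> C1" using cJ C1c by auto
    then have JI: "C1 \<inter> C2 \<in> I" using C1c unfolding circuits_def by blast
    have C3dep: "C3 \<notin> I"
    proof
      assume "C3 \<in> I"
      moreover have "card (C1 \<inter> C2) < card C3" using cJ C3 by simp
      ultimately obtain e where e: "e \<in> C3 - C1 \<inter> C2" "insert e (C1 \<inter> C2) \<in> I"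
        using augm[OF JI] by blast
      have cE: "card (insert e (C1 \<inter> C2)) = l + 1" using e cJ f1 by simp
      show False
      proof (cases "e \<in> C1")
        case True
        then have "insert e (C1 \<inter> C2) = C1" using card_subset_eq[OF f1, of "insert e (C1 \<inter> C2)"] cE C1c
          by auto
        then show False using e C1c unfolding circuits_def by auto
      next
        case False
        then have "e \<in> C2" using e C3 by auto
        then have "insert e (C1 \<inter> C2) = C2" using card_subset_eq[OF f2, of "insert e (C1 \<inter> C2)"] cE C2c
          by auto
        then show False using e C2c unfolding circuits_def by auto
      qed
    qed
    have "\<forall>D. D \<subset> C3 \<longrightarrow> D \<in> I"
    proof (intro allI impI)
      fix D assume D: "D \<subset> C3"
      show "D \<in> I"
      proof (rule ccontr)
        assume "D \<notin> I"
        then obtain C where C: "C \<subseteq> D" "C \<in> circuits {1..n} I"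
          using dep_contains_circuit[of "{1..n}" D I] D sub3 by auto
        have "card C \<le> card D" using C D sub3 fin card_mono by (meson order.trans psubset_imp_subset)
        moreover have "card D < card C3" using D sub3 fin psubset_card_mono by blast
        ultimately show False using G C C3 unfolding generic_def by auto
      qed
    qed
    then have "C3 \<in> circuits {1..n} I" using sub3 C3dep unfolding circuits_def by blast
    then show "C3 \<in> \<C>" using CC C3 by auto
  qed
qed

end
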